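(* Let $X$ and $Y$ be join semilattices. Then $(X,Y)$ is a Morita pair between some m-regular m-semilattices if and only if there exist surjective join semilattice morphisms $p: X\otimes Y\otimes X\to X$ and $q: Y\otimes X\otimes Y\to Y$ such that, for all $x_1,x_2,x_3\in X$ and $y_1,y_2,y_3\in Y$: 1. $p(p(x_1\otimes y_1\otimes x_2)\otimes y_2\otimes x_3)=p(x_1\otimes q(y_1\otimes x_2\otimes y_2)\otimes x_3)=p(x_1\otimes y_1\otimes p(x_2\otimes y_2\otimes x_3))$; 2. $q(q(y_1\otimes x_1\otimes y_2)\otimes x_2\otimes y_3)=q(y_1\otimes p(x_1\otimes y_2\otimes x_2)\otimes y_3)=q(y_1\otimes x_1\otimes q(y_2\otimes x_2\otimes y_3))$; 3. if $p(u\otimes v\otimes x_1)=p(u\otimes v\otimes x_2)$ for all $u\in X$, $v\in Y$, then $x_1=x_2$; 4. if $p(x_1\otimes v\otimes u)=p(x_2\otimes v\otimes u)$ for all $u\in X$, $v\in Y$, then $x_1=x_2$; 5. if $q(v\otimes u\otimes y_1)=q(v\otimes u\otimes y_2)$ for all $v\in Y$, $u\in X$, then $y_1=y_2$; 6. if $q(y_1\otimes u\otimes v)=q(y_2\otimes u\otimes v)$ for all $u\in X$, $v\in Y$, then $y_1=y_2$.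
   Context: A join semilattice is a poset with all finite joins (including the empty join $0$); morphisms preserve finite joins. $\otimes$ denotes the tensor product of join semilattices (universal for maps preserving finite joins in each variable). An m-semilattice is a join semilattice with an associative multiplication distributing over finite joins on both sides. Modules over an m-semilattice $A$ are join semilattices $M$ with an action $M\times A\to M$ satisfying $m\cdot(ab)=(m\cdot a)\cdot b$ and preserving finite joins in each variable (left modules dually). A right module is essential if every element is a finite join of elements $m\cdot a$, separated if ($m\cdot a=n\cdot a$ for all $a$) implies $m=n$, m-regular if both; dually on the left; an m-regular $A,B$-bimodule is an m-regular left $A$-module and m-regular right $B$-module with commuting actions; an m-semilattice is m-regular if it is m-regular as a bimodule over itself. A Morita context between m-regular m-semilattices $A,B$ is $(A,B,X,Y,(-,-),[-,-])$ with $X$ an m-regular $A,B$-bimodule, $Y$ an m-regular $B,A$-bimodule, and bimodule maps $(-,-):X\times Y\to A$, $[-,-]:Y\times X\to B$ satisfying $(x\cdot b,y)=(x,b\cdot y)$, $[y\cdot a,x]=[y,a\cdot x]$, $(x_1,y)\cdot x_2=x_1\cdot[y,x_2]$, $[y_1,x]\cdot y_2=y_1\cdot(x,y_2)$, with the induced maps $X\otimes Y\to A$, $Y\otimes X\to B$ surjective; $(X,Y)$ is then a Morita pair. *)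

theory Defs
  imports Main
begin

(* Existentially quantified structures
   (the m-semilattices A, B) are given explicitly by a carrier C, a join j,
   a zero z and (for m-semilattices) a multiplication m. *)

definition jsl :: "'a set \<Rightarrow> ('a \<Rightarrow> 'a \<Rightarrow> 'a) \<Rightarrow> 'a \<Rightarrow> bool" where
  "jsl C j z \<longleftrightarrow> z \<in> C \<and> (\<forall>a\<in>C. \<forall>b\<in>C. j a b \<in> C) \<and>
     (\<forall>a\<in>C. \<forall>b\<in>C. \<forall>c\<in>C. j (j a b) c = j a (j b c)) \<and>
     (\<forall>a\<in>C. \<forall>b\<in>C. j a b = j b a) \<and> (\<forall>a\<in>C. j a a = a) \<and> (\<forall>a\<in>C. j z a = a)"

definition msl :: "'a set \<Rightarrow> ('a \<Rightarrow> 'a \<Rightarrow> 'a) \<Rightarrow> 'a \<Rightarrow> ('a \<Rightarrow> 'a \<Rightarrow> 'a) \<Rightarrow> bool" where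
  "msl C j z m \<longleftrightarrow> jsl C j z \<and> (\<forall>a\<in>C. \<forall>b\<in>C. m a b \<in> C) \<and>
     (\<forall>a\<in>C. \<forall>b\<in>C. \<forall>c\<in>C. m (m a b) c = m a (m b c)) \<and>
     (\<forall>a\<in>C. \<forall>b\<in>C. \<forall>c\<in>C. m a (j b c) = j (m a b) (m a c)) \<and>
     (\<forall>a\<in>C. \<forall>b\<in>C. \<forall>c\<in>C. m (j b c) a = j (m b a) (m c a)) \<and>
     (\<forall>a\<in>C. m a z = z \<and> m z a = z)"

text \<open>m-regular m-semilattice: m-regular as a bimodule over itself.\<close>
definition msl_regular :: "'a set \<Rightarrow> ('a \<Rightarrow> 'a \<Rightarrow> 'a) \<Rightarrow> 'a \<Rightarrow> ('a \<Rightarrow> 'a \<Rightarrow> 'a) \<Rightarrow> bool" where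
  "msl_regular C j z m \<longleftrightarrow> msl C j z m \<and>
     (\<forall>a\<in>C. \<exists>ps. set ps \<subseteq> C \<times> C \<and> a = foldr (\<lambda>(b, c) acc. j (m b c) acc) ps z) \<and>
     (\<forall>a\<in>C. \<forall>b\<in>C. (\<forall>c\<in>C. m a c = m b c) \<longrightarrow> a = b) \<and>
     (\<forall>a\<in>C. \<forall>b\<in>C. (\<forall>c\<in>C. m c a = m c b) \<longrightarrow> a = b)"

definition rmod :: "'a set \<Rightarrow> ('a \<Rightarrow> 'a \<Rightarrow> 'a) \<Rightarrow> 'a \<Rightarrow> ('a \<Rightarrow> 'a \<Rightarrow> 'a)
    \<Rightarrow> ('x::bounded_semilattice_sup_bot \<Rightarrow> 'a \<Rightarrow> 'x) \<Rightarrow> bool" where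
  "rmod C j z m act \<longleftrightarrow>
     (\<forall>x. \<forall>a\<in>C. \<forall>b\<in>C. act x (m a b) = act (act x a) b) \<and>
     (\<forall>x y. \<forall>a\<in>C. act (sup x y) a = sup (act x a) (act y a)) \<and>
     (\<forall>a\<in>C. act bot a = bot) \<and>
     (\<forall>x. \<forall>a\<in>C. \<forall>b\<in>C. act x (j a b) = sup (act x a) (act x b)) \<and>
     (\<forall>x. act x z = bot)"

definition lmod :: "'a set \<Rightarrow> ('a \<Rightarrow> 'a \<Rightarrow> 'a) \<Rightarrow> 'a \<Rightarrow> ('a \<Rightarrow> 'a \<Rightarrow> 'a)
    \<Rightarrow> ('a \<Rightarrow> 'x::bounded_semilattice_sup_bot \<Rightarrow> 'x) \<Rightarrow> bool" where
  "lmod C j z m act \<longleftrightarrow>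
     (\<forall>x. \<forall>a\<in>C. \<forall>b\<in>C. act (m a b) x = act a (act b x)) \<and>
     (\<forall>x y. \<forall>a\<in>C. act a (sup x y) = sup (act a x) (act a y)) \<and>
     (\<forall>a\<in>C. act a bot = bot) \<and>
     (\<forall>x. \<forall>a\<in>C. \<forall>b\<in>C. act (j a b) x = sup (act a x) (act b x)) \<and>
     (\<forall>x. act z x = bot)"

definition rmod_regular :: "'a set \<Rightarrow> ('a \<Rightarrow> 'a \<Rightarrow> 'a) \<Rightarrow> 'a \<Rightarrow> ('a \<Rightarrow> 'a \<Rightarrow> 'a)
    \<Rightarrow> ('x::bounded_semilattice_sup_bot \<Rightarrow> 'a \<Rightarrow> 'x) \<Rightarrow> bool" where
  "rmod_regular C j z m act \<longleftrightarrow> rmod C j z m act \<and>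
     (\<forall>x. \<exists>ps. snd ` set ps \<subseteq> C \<and> x = foldr (\<lambda>(y, a) acc. sup (act y a) acc) ps bot) \<and>
     (\<forall>x y. (\<forall>a\<in>C. act x a = act y a) \<longrightarrow> x = y)"

definition lmod_regular :: "'a set \<Rightarrow> ('a \<Rightarrow> 'a \<Rightarrow> 'a) \<Rightarrow> 'a \<Rightarrow> ('a \<Rightarrow> 'a \<Rightarrow> 'a)
    \<Rightarrow> ('a \<Rightarrow> 'x::bounded_semilattice_sup_bot \<Rightarrow> 'x) \<Rightarrow> bool" where
  "lmod_regular C j z m act \<longleftrightarrow> lmod C j z m act \<and>
     (\<forall>x. \<exists>ps. fst ` set ps \<subseteq> C \<and> x = foldr (\<lambda>(a, y) acc. sup (act a y) acc) ps bot) \<and>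
     (\<forall>x y. (\<forall>a\<in>C. act a x = act a y) \<longrightarrow> x = y)"

(* ---------- Tensor products of join semilattices ------------------------------
   Free join semilattice on a set T of generators = finite subsets of T (join = union,
   0 = {}); the tensor product is its quotient by the congruence generated by the
   multilinearity relations R. *)

inductive fcong :: "('t set \<Rightarrow> 't set \<Rightarrow> bool) \<Rightarrow> 't set \<Rightarrow> 't set \<Rightarrow> bool" for R where
  base: "R S T \<Longrightarrow> fcong R S T"
| refl: "finite S \<Longrightarrow> fcong R S S"
| sym: "fcong R S T \<Longrightarrow> fcong R T S"
| trans: "fcong R S T \<Longrightarrow> fcong R T U \<Longrightarrow> fcong R S U"
| union: "fcong R S S' \<Longrightarrow> fcong R T T' \<Longrightarrow> fcong R (S \<union> T) (S' \<union> T')"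

definition tclass :: "('t set \<Rightarrow> 't set \<Rightarrow> bool) \<Rightarrow> 't set \<Rightarrow> 't set set" where
  "tclass R S = {T. fcong R S T}"

definition tcarrier :: "('t set \<Rightarrow> 't set \<Rightarrow> bool) \<Rightarrow> 't set set set" where
  "tcarrier R = {tclass R S | S. finite S}"

definition tjoin :: "('t set \<Rightarrow> 't set \<Rightarrow> bool) \<Rightarrow> 't set set \<Rightarrow> 't set set \<Rightarrow> 't set set" where
  "tjoin R P Q = tclass R ((SOME S. S \<in> P) \<union> (SOME T. T \<in> Q))"

definition tzero :: "('t set \<Rightarrow> 't set \<Rightarrow> bool) \<Rightarrow> 't set set" where
  "tzero R = tclass R {}"

definition tgen :: "('t set \<Rightarrow> 't set \<Rightarrow> bool) \<Rightarrow> 't \<Rightarrow> 't set set" where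
  "tgen R t = tclass R {t}"

definition gen2 :: "('x::bounded_semilattice_sup_bot \<times> 'y::bounded_semilattice_sup_bot) set
    \<Rightarrow> ('x \<times> 'y) set \<Rightarrow> bool" where
  "gen2 S T \<longleftrightarrow>
     (\<exists>x x' y. S = {(sup x x', y)} \<and> T = {(x, y), (x', y)}) \<or>
     (\<exists>x y y'. S = {(x, sup y y')} \<and> T = {(x, y), (x, y')}) \<or>
     (\<exists>y. S = {(bot, y)} \<and> T = {}) \<or>
     (\<exists>x. S = {(x, bot)} \<and> T = {})"

definition gen3 :: "('x::bounded_semilattice_sup_bot \<times> 'y::bounded_semilattice_sup_bot
      \<times> 'z::bounded_semilattice_sup_bot) set \<Rightarrow> ('x \<times> 'y \<times> 'z) set \<Rightarrow> bool" where
  "gen3 S T \<longleftrightarrow>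
     (\<exists>x x' y w. S = {(sup x x', y, w)} \<and> T = {(x, y, w), (x', y, w)}) \<or>
     (\<exists>x y y' w. S = {(x, sup y y', w)} \<and> T = {(x, y, w), (x, y', w)}) \<or>
     (\<exists>x y w w'. S = {(x, y, sup w w')} \<and> T = {(x, y, w), (x, y, w')}) \<or>
     (\<exists>y w. S = {(bot, y, w)} \<and> T = {}) \<or>
     (\<exists>x w. S = {(x, bot, w)} \<and> T = {}) \<or>
     (\<exists>x y. S = {(x, y, bot)} \<and> T = {})"

abbreviation tens2 :: "'x::bounded_semilattice_sup_bot \<Rightarrow> 'y::bounded_semilattice_sup_bot
    \<Rightarrow> ('x \<times> 'y) set set" where
  "tens2 x y \<equiv> tgen gen2 (x, y)"

abbreviation tens3 :: "'x::bounded_semilattice_sup_bot \<Rightarrow> 'y::bounded_semilattice_sup_bot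
    \<Rightarrow> 'z::bounded_semilattice_sup_bot \<Rightarrow> ('x \<times> 'y \<times> 'z) set set" where
  "tens3 x y w \<equiv> tgen gen3 (x, y, w)"

definition thom_cls :: "('t set \<Rightarrow> 't set \<Rightarrow> bool) \<Rightarrow> ('t set set \<Rightarrow> 'x::bounded_semilattice_sup_bot) \<Rightarrow> bool" where
  "thom_cls R f \<longleftrightarrow> f (tzero R) = bot \<and>
     (\<forall>P\<in>tcarrier R. \<forall>Q\<in>tcarrier R. f (tjoin R P Q) = sup (f P) (f Q))"

definition thom :: "('t set \<Rightarrow> 't set \<Rightarrow> bool) \<Rightarrow> 'a set \<Rightarrow> ('a \<Rightarrow> 'a \<Rightarrow> 'a) \<Rightarrow> 'a
    \<Rightarrow> ('t set set \<Rightarrow> 'a) \<Rightarrow> bool" where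
  "thom R C j z f \<longleftrightarrow> f ` tcarrier R \<subseteq> C \<and> f (tzero R) = z \<and>
     (\<forall>P\<in>tcarrier R. \<forall>Q\<in>tcarrier R. f (tjoin R P Q) = j (f P) (f Q))"

definition morita_context ::
  "'a set \<Rightarrow> ('a \<Rightarrow> 'a \<Rightarrow> 'a) \<Rightarrow> 'a \<Rightarrow> ('a \<Rightarrow> 'a \<Rightarrow> 'a) \<Rightarrow>
   'b set \<Rightarrow> ('b \<Rightarrow> 'b \<Rightarrow> 'b) \<Rightarrow> 'b \<Rightarrow> ('b \<Rightarrow> 'b \<Rightarrow> 'b) \<Rightarrow>
   ('a \<Rightarrow> 'x::bounded_semilattice_sup_bot \<Rightarrow> 'x) \<Rightarrow> ('x \<Rightarrow> 'b \<Rightarrow> 'x) \<Rightarrow>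
   ('b \<Rightarrow> 'y::bounded_semilattice_sup_bot \<Rightarrow> 'y) \<Rightarrow> ('y \<Rightarrow> 'a \<Rightarrow> 'y) \<Rightarrow>
   ('x \<Rightarrow> 'y \<Rightarrow> 'a) \<Rightarrow> ('y \<Rightarrow> 'x \<Rightarrow> 'b) \<Rightarrow> bool" where
  "morita_context CA jA zA mA CB jB zB mB lX rX lY rY pr br \<longleftrightarrow>
     msl_regular CA jA zA mA \<and> msl_regular CB jB zB mB \<and>
     \<comment> \<open>X is an m-regular A,B-bimodule\<close>
     lmod_regular CA jA zA mA lX \<and> rmod_regular CB jB zB mB rX \<and>
     (\<forall>a\<in>CA. \<forall>b\<in>CB. \<forall>x. rX (lX a x) b = lX a (rX x b)) \<and>
     \<comment> \<open>Y is an m-regular B,A-bimodule\<close>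
     lmod_regular CB jB zB mB lY \<and> rmod_regular CA jA zA mA rY \<and>
     (\<forall>b\<in>CB. \<forall>a\<in>CA. \<forall>y. rY (lY b y) a = lY b (rY y a)) \<and>
     \<comment> \<open>(-,-) : X \<times> Y \<rightarrow> A is an A,A-bimodule map preserving finite joins in each variable\<close>
     (\<forall>x y. pr x y \<in> CA) \<and>
     (\<forall>x x' y. pr (sup x x') y = jA (pr x y) (pr x' y)) \<and> (\<forall>y. pr bot y = zA) \<and>
     (\<forall>x y y'. pr x (sup y y') = jA (pr x y) (pr x y')) \<and> (\<forall>x. pr x bot = zA) \<and>
     (\<forall>a\<in>CA. \<forall>x y. pr (lX a x) y = mA a (pr x y)) \<and>
     (\<forall>a\<in>CA. \<forall>x y. pr x (rY y a) = mA (pr x y) a) \<and>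
     \<comment> \<open>[-,-] : Y \<times> X \<rightarrow> B is a B,B-bimodule map preserving finite joins in each variable\<close>
     (\<forall>y x. br y x \<in> CB) \<and>
     (\<forall>y y' x. br (sup y y') x = jB (br y x) (br y' x)) \<and> (\<forall>x. br bot x = zB) \<and>
     (\<forall>y x x'. br y (sup x x') = jB (br y x) (br y x')) \<and> (\<forall>y. br y bot = zB) \<and>
     (\<forall>b\<in>CB. \<forall>y x. br (lY b y) x = mB b (br y x)) \<and>
     (\<forall>b\<in>CB. \<forall>y x. br y (rX x b) = mB (br y x) b) \<and>
     \<comment> \<open>Morita identities\<close>
     (\<forall>x y. \<forall>b\<in>CB. pr (rX x b) y = pr x (lY b y)) \<and>
     (\<forall>y x. \<forall>a\<in>CA. br (rY y a) x = br y (lX a x)) \<and>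
     (\<forall>x1 y x2. lX (pr x1 y) x2 = rX x1 (br y x2)) \<and>
     (\<forall>y1 x y2. lY (br y1 x) y2 = rY y1 (pr x y2)) \<and>
     \<comment> \<open>the induced maps X \<otimes> Y \<rightarrow> A and Y \<otimes> X \<rightarrow> B are surjective\<close>
     (\<exists>h. thom gen2 CA jA zA h \<and> (\<forall>x y. h (tens2 x y) = pr x y) \<and> h ` tcarrier gen2 = CA) \<and>
     (\<exists>h. thom gen2 CB jB zB h \<and> (\<forall>y x. h (tens2 y x) = br y x) \<and> h ` tcarrier gen2 = CB)"

text \<open>(X,Y) is a Morita pair between some m-regular m-semilattices A, B whose carriers
  live in the types 'a and 'b.\<close>
definition morita_pair :: "'a itself \<Rightarrow> 'b itself \<Rightarrow> 'x::bounded_semilattice_sup_bot itself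
    \<Rightarrow> 'y::bounded_semilattice_sup_bot itself \<Rightarrow> bool" where
  "morita_pair _ _ _ _ \<longleftrightarrow>
     (\<exists>(CA::'a set) jA zA mA (CB::'b set) jB zB mB
        (lX::'a \<Rightarrow> 'x \<Rightarrow> 'x) rX (lY::'b \<Rightarrow> 'y \<Rightarrow> 'y) rY pr br.
        morita_context CA jA zA mA CB jB zB mB lX rX lY rY pr br)"

end

theory Submission
  imports Defs
begin


definition fj :: "('t \<Rightarrow> 'v::bounded_semilattice_sup_bot) \<Rightarrow> 't set \<Rightarrow> 'v" where
  "fj g S = Finite_Set.fold sup bot (g ` S)"

lemma fj_empty[simp]: "fj g {} = bot"
  by (simp add: fj_def)

lemma fj_insert[simp]: fixes g :: "'t \<Rightarrow> 'v::bounded_semilattice_sup_bot" shows "finite S \<Longrightarrow> fj g (insert t S) = sup (g t) (fj g S)"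
proof -
  interpret comp_fun_idem "sup :: 'v \<Rightarrow> 'v \<Rightarrow> 'v" by (rule comp_fun_idem_sup)
  assume "finite S" then show ?thesis by (simp add: fj_def)
qed

lemma fj_union: "finite S \<Longrightarrow> finite T \<Longrightarrow> fj g (S \<union> T) = sup (fj g S) (fj g T)"
  by (induct S rule: finite_induct) (auto simp: sup_assoc)

definition fin_rel :: "('t set \<Rightarrow> 't set \<Rightarrow> bool) \<Rightarrow> bool" where
  "fin_rel R \<longleftrightarrow> (\<forall>S T. R S T \<longrightarrow> finite S \<and> finite T)"

lemma fin_gen2: "fin_rel gen2"
  unfolding fin_rel_def gen2_def by auto

lemma fin_gen3: "fin_rel gen3"
  unfolding fin_rel_def gen3_def by auto

lemma fcong_finite: "fcong R S T \<Longrightarrow> fin_rel R \<Longrightarrow> finite S \<and> finite T"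
  by (induct rule: fcong.induct) (auto simp: fin_rel_def)

lemma tclass_eq: "fcong R S T \<Longrightarrow> tclass R S = tclass R T"
  unfolding tclass_def by (auto intro: fcong.trans fcong.sym)

lemma in_tclass: "finite S \<Longrightarrow> S \<in> tclass R S"
  unfolding tclass_def by (auto intro: fcong.refl)

lemma some_tclass: "finite S \<Longrightarrow> fcong R S (SOME T. T \<in> tclass R S)"
  using someI[of "\<lambda>T. T \<in> tclass R S" S, OF in_tclass] unfolding tclass_def by auto

lemma tjoin_tclass:
  assumes "finite S" "finite T"
  shows "tjoin R (tclass R S) (tclass R T) = tclass R (S \<union> T)"
  unfolding tjoin_def
  by (rule tclass_eq[symmetric], rule fcong.union, (rule some_tclass, fact)+)

lemma tzero_in: "tzero R \<in> tcarrier R"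
  unfolding tzero_def tcarrier_def by auto

lemma tgen_in: "tgen R t \<in> tcarrier R"
  unfolding tgen_def tcarrier_def by auto

lemma tjoin_in: "P \<in> tcarrier R \<Longrightarrow> Q \<in> tcarrier R \<Longrightarrow> tjoin R P Q \<in> tcarrier R"
  unfolding tcarrier_def by (auto simp: tjoin_tclass)

lemma tcarrier_induct[consumes 1, case_names zero gen join]:
  assumes "P \<in> tcarrier R"
    and "\<Phi> (tzero R)" and "\<And>t. \<Phi> (tgen R t)"
    and "\<And>P Q. P \<in> tcarrier R \<Longrightarrow> Q \<in> tcarrier R \<Longrightarrow> \<Phi> P \<Longrightarrow> \<Phi> Q \<Longrightarrow> \<Phi> (tjoin R P Q)"
  shows "\<Phi> P"
proof -
  obtain S where S: "finite S" "P = tclass R S" using assms(1) unfolding tcarrier_def by auto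
  have "\<Phi> (tclass R S) \<and> tclass R S \<in> tcarrier R" using S(1)
  proof (induct S rule: finite_induct)
    case empty then show ?case using assms(2) tzero_in[of R] by (simp add: tzero_def)
  next
    case (insert t S)
    have e: "tclass R (insert t S) = tjoin R (tgen R t) (tclass R S)"
      using insert(1) by (simp add: tgen_def tjoin_tclass)
    show ?case unfolding e using insert assms(3,4) tgen_in tjoin_in by metis
  qed
  then show ?thesis using S by simp
qed

lemma fcong_fj:
  assumes "fin_rel R" "\<And>S T. R S T \<Longrightarrow> fj g S = fj g T" "fcong R S T"
  shows "fj g S = fj g T"
  using assms(3)
proof (induct rule: fcong.induct)
  case (union S S' T T')
  then show ?case using fcong_finite[OF _ assms(1)] by (simp add: fj_union)
qed (use assms in auto)

definition lift :: "('t set \<Rightarrow> 't set \<Rightarrow> bool) \<Rightarrow> ('t \<Rightarrow> 'v::bounded_semilattice_sup_bot) \<Rightarrow> 't set set \<Rightarrow> 'v" where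
  "lift R g P = fj g (SOME S. S \<in> P)"

definition resp :: "('t set \<Rightarrow> 't set \<Rightarrow> bool) \<Rightarrow> ('t \<Rightarrow> 'v::bounded_semilattice_sup_bot) \<Rightarrow> bool" where
  "resp R g \<longleftrightarrow> (\<forall>S T. R S T \<longrightarrow> fj g S = fj g T)"

lemma lift_tclass:
  assumes "fin_rel R" "resp R g" "finite S"
  shows "lift R g (tclass R S) = fj g S"
  unfolding lift_def
  by (rule fcong_fj[OF assms(1) _ some_tclass[OF assms(3)], symmetric]) (use assms(2) in \<open>auto simp: resp_def\<close>)

lemma lift_gen: "fin_rel R \<Longrightarrow> resp R g \<Longrightarrow> lift R g (tgen R t) = g t"
  unfolding tgen_def by (simp add: lift_tclass)

lemma lift_zero: "fin_rel R \<Longrightarrow> resp R g \<Longrightarrow> lift R g (tzero R) = bot"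
  unfolding tzero_def by (simp add: lift_tclass)

lemma lift_join: "fin_rel R \<Longrightarrow> resp R g \<Longrightarrow> P \<in> tcarrier R \<Longrightarrow> Q \<in> tcarrier R \<Longrightarrow>
   lift R g (tjoin R P Q) = sup (lift R g P) (lift R g Q)"
  unfolding tcarrier_def by (auto simp: tjoin_tclass lift_tclass fj_union)

lemma lift_thom: "fin_rel R \<Longrightarrow> resp R g \<Longrightarrow> thom_cls R (lift R g)"
  unfolding thom_cls_def by (simp add: lift_zero lift_join)

lemma thom_cls_tclass:
  assumes "thom_cls R f" "finite S"
  shows "f (tclass R S) = fj (\<lambda>t. f (tgen R t)) S"
  using assms(2)
proof (induct S rule: finite_induct)
  case empty then show ?case using assms(1) by (simp add: thom_cls_def tzero_def)
next
  case (insert t S)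
  have e: "tclass R (insert t S) = tjoin R (tgen R t) (tclass R S)"
    using insert(1) by (simp add: tgen_def tjoin_tclass)
  have "tclass R S \<in> tcarrier R" using insert(1) unfolding tcarrier_def by auto
  then show ?case unfolding e using assms(1) insert tgen_in[of R t] by (simp add: thom_cls_def)
qed

lemma thom_cls_rel:
  assumes "thom_cls R f" "R S T" "fin_rel R"
  shows "fj (\<lambda>t. f (tgen R t)) S = fj (\<lambda>t. f (tgen R t)) T"
proof -
  have "fcong R S T" using assms(2) by (rule fcong.base)
  then have "tclass R S = tclass R T" by (rule tclass_eq)
  moreover have "finite S" "finite T" using assms(2,3) by (auto simp: fin_rel_def)
  ultimately show ?thesis using thom_cls_tclass[OF assms(1)] by metis
qed

lemma tri_lin:
  fixes f :: "('x::bounded_semilattice_sup_bot \<times> 'y::bounded_semilattice_sup_bot \<times> 'z::bounded_semilattice_sup_bot) set set \<Rightarrow> 'v::bounded_semilattice_sup_bot"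
  assumes "thom_cls gen3 f"
  shows "f (tens3 (sup x x') y w) = sup (f (tens3 x y w)) (f (tens3 x' y w))"
    and "f (tens3 x (sup y y') w) = sup (f (tens3 x y w)) (f (tens3 x y' w))"
    and "f (tens3 x y (sup w w')) = sup (f (tens3 x y w)) (f (tens3 x y w'))"
    and "f (tens3 bot y w) = bot"
    and "f (tens3 x bot w) = bot"
    and "f (tens3 x y bot) = bot"
proof -
  have r: "\<And>S T. gen3 S T \<Longrightarrow> fj (\<lambda>t. f (tgen gen3 t)) S = fj (\<lambda>t. f (tgen gen3 t)) T"
    using thom_cls_rel[OF assms _ fin_gen3] by blast
  have g: "gen3 {(sup x x', y, w)} {(x, y, w), (x', y, w)}" "gen3 {(x, sup y y', w)} {(x, y, w), (x, y', w)}"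
    "gen3 {(x, y, sup w w')} {(x, y, w), (x, y, w')}" "gen3 {(bot, y, w)} {}" "gen3 {(x, bot, w)} {}"
    "gen3 {(x, y, bot)} {}"
    unfolding gen3_def by blast+
  show "f (tens3 (sup x x') y w) = sup (f (tens3 x y w)) (f (tens3 x' y w))"
    using r[OF g(1)] by simp
  show "f (tens3 x (sup y y') w) = sup (f (tens3 x y w)) (f (tens3 x y' w))"
    using r[OF g(2)] by simp
  show "f (tens3 x y (sup w w')) = sup (f (tens3 x y w)) (f (tens3 x y w'))"
    using r[OF g(3)] by simp
  show "f (tens3 bot y w) = bot"
    using r[OF g(4)] by simp
  show "f (tens3 x bot w) = bot"
    using r[OF g(5)] by simp
  show "f (tens3 x y bot) = bot"
    using r[OF g(6)] by simp
qed

lemma resp_gen2: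
  fixes g :: "'x::bounded_semilattice_sup_bot \<times> 'y::bounded_semilattice_sup_bot \<Rightarrow> 'v::bounded_semilattice_sup_bot"
  assumes "\<And>x x' y. g (sup x x', y) = sup (g (x, y)) (g (x', y))"
    "\<And>x y y'. g (x, sup y y') = sup (g (x, y)) (g (x, y'))"
    "\<And>y. g (bot, y) = bot" "\<And>x. g (x, bot) = bot"
  shows "resp gen2 g"
  unfolding resp_def gen2_def using assms by auto

lemma resp_gen3:
  fixes g :: "'x::bounded_semilattice_sup_bot \<times> 'y::bounded_semilattice_sup_bot \<times> 'z::bounded_semilattice_sup_bot \<Rightarrow> 'v::bounded_semilattice_sup_bot"
  assumes "\<And>x x' y w. g (sup x x', y, w) = sup (g (x, y, w)) (g (x', y, w))"
    "\<And>x y y' w. g (x, sup y y', w) = sup (g (x, y, w)) (g (x, y', w))"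
    "\<And>x y w w'. g (x, y, sup w w') = sup (g (x, y, w)) (g (x, y, w'))"
    "\<And>y w. g (bot, y, w) = bot" "\<And>x w. g (x, bot, w) = bot" "\<And>x y. g (x, y, bot) = bot"
  shows "resp gen3 g"
  unfolding resp_def gen3_def using assms by auto

lemma foldr_sup_pair0:
  "sup (foldr (\<lambda>(a, y) acc. sup (G a y) acc) ps bot) z = foldr (\<lambda>(a, y) acc. sup (G a y) acc) ps (z::'v::bounded_semilattice_sup_bot)"
  by (induct ps) (auto simp: sup_assoc)

lemma foldr_sup_pair:
  "foldr (\<lambda>(a, y) acc. sup (G a y) acc) ps z = sup (foldr (\<lambda>(a, y) acc. sup (G a y) acc) ps bot) (z::'v::bounded_semilattice_sup_bot)"
  by (rule foldr_sup_pair0[symmetric])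

lemma foldr_sup_append:
  "foldr (\<lambda>(a, y) acc. sup (G a y) acc) (ps @ qs) bot = sup (foldr (\<lambda>(a, y) acc. sup (G a y) acc) ps bot) (foldr (\<lambda>(a, y) acc. sup (G a y) acc) qs (bot::'v::bounded_semilattice_sup_bot))"
  by (simp add: foldr_sup_pair0)



lemma morita_swap:
  "morita_context CA jA zA mA CB jB zB mB lX rX lY rY pr br \<Longrightarrow>
   morita_context CB jB zB mB CA jA zA mA lY rY lX rX br pr"
  unfolding morita_context_def by (elim conjE, intro conjI) assumption+

locale MC =
  fixes CA :: "'a set" and jA zA mA and CB :: "'b set" and jB zB mB
    and lX :: "'a \<Rightarrow> 'x::bounded_semilattice_sup_bot \<Rightarrow> 'x" and rX
    and lY :: "'b \<Rightarrow> 'y::bounded_semilattice_sup_bot \<Rightarrow> 'y" and rY and pr and br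
  assumes mc: "morita_context CA jA zA mA CB jB zB mB lX rX lY rY pr br"
begin

lemma lmA: "lmod_regular CA jA zA mA lX"
  using mc unfolding morita_context_def by (-, elim conjE) assumption
lemma rmB: "rmod_regular CB jB zB mB rX"
  using mc unfolding morita_context_def by (-, elim conjE) assumption
lemma pr_in': "\<forall>x y. pr x y \<in> CA"
  using mc unfolding morita_context_def by (-, elim conjE) assumption
lemma br_in': "\<forall>y x. br y x \<in> CB"
  using mc unfolding morita_context_def by (-, elim conjE) assumption
lemma pr_sup1': "\<forall>x x' y. pr (sup x x') y = jA (pr x y) (pr x' y)"
  using mc unfolding morita_context_def by (-, elim conjE) assumption
lemma pr_bot1': "\<forall>y. pr bot y = zA"
  using mc unfolding morita_context_def by (-, elim conjE) assumption
lemma pr_sup2': "\<forall>x y y'. pr x (sup y y') = jA (pr x y) (pr x y')"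
  using mc unfolding morita_context_def by (-, elim conjE) assumption
lemma pr_bot2': "\<forall>x. pr x bot = zA"
  using mc unfolding morita_context_def by (-, elim conjE) assumption
lemma pr_lX': "\<forall>a\<in>CA. \<forall>x y. pr (lX a x) y = mA a (pr x y)"
  using mc unfolding morita_context_def by (-, elim conjE) assumption
lemma id1': "\<forall>x y. \<forall>b\<in>CB. pr (rX x b) y = pr x (lY b y)"
  using mc unfolding morita_context_def by (-, elim conjE) assumption
lemma id3': "\<forall>x1 y x2. lX (pr x1 y) x2 = rX x1 (br y x2)"
  using mc unfolding morita_context_def by (-, elim conjE) assumption
lemma hA: "\<exists>h. thom gen2 CA jA zA h \<and> (\<forall>x y. h (tens2 x y) = pr x y) \<and> h ` tcarrier gen2 = CA"
  using mc unfolding morita_context_def by (-, elim conjE) assumption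
lemma hB: "\<exists>h. thom gen2 CB jB zB h \<and> (\<forall>y x. h (tens2 y x) = br y x) \<and> h ` tcarrier gen2 = CB"
  using mc unfolding morita_context_def by (-, elim conjE) assumption

lemma pr_in: "pr x y \<in> CA" using pr_in' by blast
lemma br_in: "br y x \<in> CB" using br_in' by blast
lemma pr_sup1: "pr (sup x x') y = jA (pr x y) (pr x' y)" using pr_sup1' by blast
lemma pr_bot1: "pr bot y = zA" using pr_bot1' by blast
lemma pr_sup2: "pr x (sup y y') = jA (pr x y) (pr x y')" using pr_sup2' by blast
lemma pr_bot2: "pr x bot = zA" using pr_bot2' by blast
lemma pr_lX: "a \<in> CA \<Longrightarrow> pr (lX a x) y = mA a (pr x y)" using pr_lX' by blast
lemma id1: "b \<in> CB \<Longrightarrow> pr (rX x b) y = pr x (lY b y)" using id1' by blast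
lemma id3: "lX (pr x1 y) x2 = rX x1 (br y x2)" using id3' by blast

lemma lX_m': "\<forall>x. \<forall>a\<in>CA. \<forall>b\<in>CA. lX (mA a b) x = lX a (lX b x)"
  using lmA unfolding lmod_regular_def lmod_def by (-, elim conjE) assumption
lemma lX_sup': "\<forall>x y. \<forall>a\<in>CA. lX a (sup x y) = sup (lX a x) (lX a y)"
  using lmA unfolding lmod_regular_def lmod_def by (-, elim conjE) assumption
lemma lX_bot': "\<forall>a\<in>CA. lX a bot = bot"
  using lmA unfolding lmod_regular_def lmod_def by (-, elim conjE) assumption
lemma lX_j': "\<forall>x. \<forall>a\<in>CA. \<forall>b\<in>CA. lX (jA a b) x = sup (lX a x) (lX b x)"
  using lmA unfolding lmod_regular_def lmod_def by (-, elim conjE) assumption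
lemma lX_z': "\<forall>x. lX zA x = bot"
  using lmA unfolding lmod_regular_def lmod_def by (-, elim conjE) assumption
lemma lX_ess': "\<forall>x. \<exists>ps. fst ` set ps \<subseteq> CA \<and> x = foldr (\<lambda>(a, y) acc. sup (lX a y) acc) ps bot"
  using lmA unfolding lmod_regular_def lmod_def by (-, elim conjE) assumption
lemma lX_sep': "\<forall>x y. (\<forall>a\<in>CA. lX a x = lX a y) \<longrightarrow> x = y"
  using lmA unfolding lmod_regular_def lmod_def by (-, elim conjE) assumption

lemma lX_j: "a \<in> CA \<Longrightarrow> b \<in> CA \<Longrightarrow> lX (jA a b) x = sup (lX a x) (lX b x)" using lX_j' by blast
lemma lX_z: "lX zA x = bot" using lX_z' by blast
lemma lX_m: "a \<in> CA \<Longrightarrow> b \<in> CA \<Longrightarrow> lX (mA a b) x = lX a (lX b x)" using lX_m' by blast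
lemma lX_sup: "a \<in> CA \<Longrightarrow> lX a (sup x y) = sup (lX a x) (lX a y)" using lX_sup' by blast
lemma lX_bot: "a \<in> CA \<Longrightarrow> lX a bot = bot" using lX_bot' by blast
lemma lX_sep: "(\<forall>a\<in>CA. lX a x = lX a y) \<Longrightarrow> x = y" using lX_sep' by blast
lemma lX_ess: "\<exists>ps. fst ` set ps \<subseteq> CA \<and> x = foldr (\<lambda>(a, y) acc. sup (lX a y) acc) ps bot"
  using lX_ess' by blast

lemma rX_j': "\<forall>x. \<forall>a\<in>CB. \<forall>b\<in>CB. rX x (jB a b) = sup (rX x a) (rX x b)"
  using rmB unfolding rmod_regular_def rmod_def by (-, elim conjE) assumption
lemma rX_z': "\<forall>x. rX x zB = bot"
  using rmB unfolding rmod_regular_def rmod_def by (-, elim conjE) assumption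
lemma rX_sep': "\<forall>x y. (\<forall>a\<in>CB. rX x a = rX y a) \<longrightarrow> x = y"
  using rmB unfolding rmod_regular_def rmod_def by (-, elim conjE) assumption

lemma rX_j: "a \<in> CB \<Longrightarrow> b \<in> CB \<Longrightarrow> rX x (jB a b) = sup (rX x a) (rX x b)" using rX_j' by blast
lemma rX_z: "rX x zB = bot" using rX_z' by blast
lemma rX_sep: "(\<forall>a\<in>CB. rX x a = rX y a) \<Longrightarrow> x = y" using rX_sep' by blast

lemma CA_induct[consumes 1, case_names zero pr join]:
  assumes "a \<in> CA" "\<Phi> zA" "\<And>x y. \<Phi> (pr x y)"
    "\<And>a b. a \<in> CA \<Longrightarrow> b \<in> CA \<Longrightarrow> \<Phi> a \<Longrightarrow> \<Phi> b \<Longrightarrow> \<Phi> (jA a b)"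
  shows "\<Phi> a"
proof -
  obtain h where h: "thom gen2 CA jA zA h" "\<And>x y. h (tens2 x y) = pr x y" "h ` tcarrier gen2 = CA"
    using hA by blast
  obtain P where P: "P \<in> tcarrier gen2" "a = h P" using assms(1) h(3) by blast
  have "\<Phi> (h P)" using P(1)
  proof (induct rule: tcarrier_induct)
    case zero then show ?case using h(1) assms(2) by (simp add: thom_def)
  next
    case (gen t) then show ?case using h(2) assms(3) by (cases t) auto
  next
    case (join P Q)
    have "h P \<in> CA" "h Q \<in> CA" using join(1,2) h(1) by (auto simp: thom_def)
    then show ?case using join h(1) assms(4) by (simp add: thom_def)
  qed
  then show ?thesis using P by simp
qed

lemma CB_induct[consumes 1, case_names zero br join]:
  assumes "b \<in> CB" "\<Phi> zB" "\<And>y x. \<Phi> (br y x)"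
    "\<And>a b. a \<in> CB \<Longrightarrow> b \<in> CB \<Longrightarrow> \<Phi> a \<Longrightarrow> \<Phi> b \<Longrightarrow> \<Phi> (jB a b)"
  shows "\<Phi> b"
proof -
  obtain h where h: "thom gen2 CB jB zB h" "\<And>y x. h (tens2 y x) = br y x" "h ` tcarrier gen2 = CB"
    using hB by blast
  obtain P where P: "P \<in> tcarrier gen2" "b = h P" using assms(1) h(3) by blast
  have "\<Phi> (h P)" using P(1)
  proof (induct rule: tcarrier_induct)
    case zero then show ?case using h(1) assms(2) by (simp add: thom_def)
  next
    case (gen t) then show ?case using h(2) assms(3) by (cases t) auto
  next
    case (join P Q)
    have "h P \<in> CB" "h Q \<in> CB" using join(1,2) h(1) by (auto simp: thom_def)
    then show ?case using join h(1) assms(4) by (simp add: thom_def)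
  qed
  then show ?thesis using P by simp
qed

definition g3 :: "'x \<times> 'y \<times> 'x \<Rightarrow> 'x" where
  "g3 t = (case t of (x, y, w) \<Rightarrow> lX (pr x y) w)"

definition pp :: "('x \<times> 'y \<times> 'x) set set \<Rightarrow> 'x" where
  "pp = lift gen3 g3"

lemma resp_g3: "resp gen3 g3"
  by (rule resp_gen3) (simp_all add: g3_def pr_sup1 pr_sup2 pr_bot1 pr_bot2 lX_j lX_z pr_in lX_sup lX_bot)

lemma pp_tens: "pp (tens3 x y w) = lX (pr x y) w"
  unfolding pp_def by (simp add: lift_gen[OF fin_gen3 resp_g3] g3_def)

lemma pp_thom: "thom_cls gen3 pp"
  unfolding pp_def by (rule lift_thom[OF fin_gen3 resp_g3])

lemma pp_zero: "pp (tzero gen3) = bot"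
  unfolding pp_def by (rule lift_zero[OF fin_gen3 resp_g3])

lemma pp_join: "P \<in> tcarrier gen3 \<Longrightarrow> Q \<in> tcarrier gen3 \<Longrightarrow> pp (tjoin gen3 P Q) = sup (pp P) (pp Q)"
  unfolding pp_def by (rule lift_join[OF fin_gen3 resp_g3])

lemma pp_surj: "pp ` tcarrier gen3 = UNIV"
proof -
  have cl: "sup a b \<in> pp ` tcarrier gen3" if h: "a \<in> pp ` tcarrier gen3" "b \<in> pp ` tcarrier gen3" for a b
  proof -
    obtain P Q where "P \<in> tcarrier gen3" "Q \<in> tcarrier gen3" "a = pp P" "b = pp Q" using h by blast
    then show ?thesis
      by (intro image_eqI[where x = "tjoin gen3 P Q"]) (simp_all add: pp_join tjoin_in)
  qed
  have bt: "bot \<in> pp ` tcarrier gen3"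
    by (rule image_eqI[where x = "tzero gen3"]) (simp_all add: pp_zero tzero_in)
  have gn: "lX (pr x y') y \<in> pp ` tcarrier gen3" for x y' y
    by (rule image_eqI[where x = "tens3 x y' y"]) (simp_all add: pp_tens tgen_in)
  have lx: "lX a y \<in> pp ` tcarrier gen3" if "a \<in> CA" for a y
    using that
  proof (induct a rule: CA_induct)
    case zero then show ?case using bt by (simp only: lX_z)
  next
    case (pr x y') then show ?case by (rule gn)
  next
    case (join a b) then show ?case using cl by (simp only: lX_j)
  qed
  have "x \<in> pp ` tcarrier gen3" for x
  proof -
    obtain ps where ps: "fst ` set ps \<subseteq> CA" "x = foldr (\<lambda>(a, y) acc. sup (lX a y) acc) ps bot"
      using lX_ess by blast
    have "foldr (\<lambda>(a, y) acc. sup (lX a y) acc) ps bot \<in> pp ` tcarrier gen3" using ps(1)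
    proof (induct ps)
      case Nil then show ?case using bt by (simp only: foldr.simps id_apply)
    next
      case (Cons ay ps)
      obtain a y where ay: "ay = (a, y)" by fastforce
      have a: "a \<in> CA" and ps': "fst ` set ps \<subseteq> CA" using Cons(2) ay by auto
      have IH: "foldr (\<lambda>(a, y) acc. sup (lX a y) acc) ps bot \<in> pp ` tcarrier gen3"
        using Cons(1) ps' by blast
      have e: "foldr (\<lambda>(a, y) acc. sup (lX a y) acc) (ay # ps) bot
          = sup (lX a y) (foldr (\<lambda>(a, y) acc. sup (lX a y) acc) ps bot)" using ay by simp
      show ?case unfolding e by (rule cl[OF lx[OF a] IH])
    qed
    then show ?thesis using ps by simp
  qed
  then show ?thesis by blast
qed

lemma pp_c1:
  "lX (pr (lX (pr x1 y1) x2) y2) x3 = lX (pr x1 (lY (br y1 x2) y2)) x3"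
  "lX (pr x1 (lY (br y1 x2) y2)) x3 = lX (pr x1 y1) (lX (pr x2 y2) x3)"
proof -
  show "lX (pr (lX (pr x1 y1) x2) y2) x3 = lX (pr x1 (lY (br y1 x2) y2)) x3"
    by (simp add: id1[symmetric] br_in id3)
  show "lX (pr x1 (lY (br y1 x2) y2)) x3 = lX (pr x1 y1) (lX (pr x2 y2) x3)"
    by (simp add: id1[symmetric] br_in id3[symmetric] pr_lX pr_in lX_m)
qed

lemma pp_c3: "(\<forall>u v. pp (tens3 u v x1) = pp (tens3 u v x2)) \<longrightarrow> x1 = x2"
proof
  assume h: "\<forall>u v. pp (tens3 u v x1) = pp (tens3 u v x2)"
  have "lX a x1 = lX a x2" if "a \<in> CA" for a
    using that
  proof (induct rule: CA_induct)
    case zero then show ?case by (simp add: lX_z)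
  next
    case (pr x y) then show ?case using h by (simp add: pp_tens)
  next
    case (join a b) then show ?case by (simp add: lX_j)
  qed
  then show "x1 = x2" using lX_sep by blast
qed

lemma pp_c4: "(\<forall>u v. pp (tens3 x1 v u) = pp (tens3 x2 v u)) \<longrightarrow> x1 = x2"
proof
  assume h: "\<forall>u v. pp (tens3 x1 v u) = pp (tens3 x2 v u)"
  have "rX x1 b = rX x2 b" if "b \<in> CB" for b
    using that
  proof (induct rule: CB_induct)
    case zero then show ?case by (simp add: rX_z)
  next
    case (br y x) then show ?case using h by (simp add: pp_tens id3)
  next
    case (join a b) then show ?case by (simp add: rX_j)
  qed
  then show "x1 = x2" using rX_sep by blast
qed

end

lemma dir1:
  fixes lX :: "'a \<Rightarrow> 'x::bounded_semilattice_sup_bot \<Rightarrow> 'x" and lY :: "'b \<Rightarrow> 'y::bounded_semilattice_sup_bot \<Rightarrow> 'y"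
  assumes "morita_context CA jA zA mA CB jB zB mB lX rX lY rY pr br"
  shows "\<exists>(p :: ('x::bounded_semilattice_sup_bot \<times> 'y::bounded_semilattice_sup_bot \<times> 'x) set set \<Rightarrow> 'x) (q :: ('y \<times> 'x \<times> 'y) set set \<Rightarrow> 'y).
      thom_cls gen3 p \<and> p ` tcarrier gen3 = UNIV \<and>
      thom_cls gen3 q \<and> q ` tcarrier gen3 = UNIV \<and>
      (\<forall>x1 x2 x3 y1 y2.
          p (tens3 (p (tens3 x1 y1 x2)) y2 x3) = p (tens3 x1 (q (tens3 y1 x2 y2)) x3) \<and>
          p (tens3 x1 (q (tens3 y1 x2 y2)) x3) = p (tens3 x1 y1 (p (tens3 x2 y2 x3)))) \<and>
      (\<forall>x1 x2 y1 y2 y3.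
          q (tens3 (q (tens3 y1 x1 y2)) x2 y3) = q (tens3 y1 (p (tens3 x1 y2 x2)) y3) \<and>
          q (tens3 y1 (p (tens3 x1 y2 x2)) y3) = q (tens3 y1 x1 (q (tens3 y2 x2 y3)))) \<and>
      (\<forall>x1 x2. (\<forall>u v. p (tens3 u v x1) = p (tens3 u v x2)) \<longrightarrow> x1 = x2) \<and>
      (\<forall>x1 x2. (\<forall>u v. p (tens3 x1 v u) = p (tens3 x2 v u)) \<longrightarrow> x1 = x2) \<and>
      (\<forall>y1 y2. (\<forall>v u. q (tens3 v u y1) = q (tens3 v u y2)) \<longrightarrow> y1 = y2) \<and>
      (\<forall>y1 y2. (\<forall>u v. q (tens3 y1 u v) = q (tens3 y2 u v)) \<longrightarrow> y1 = y2)"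
proof -
  interpret A: MC CA jA zA mA CB jB zB mB lX rX lY rY pr br by (rule MC.intro, rule assms)
  interpret B: MC CB jB zB mB CA jA zA mA lY rY lX rX br pr by (rule MC.intro, rule morita_swap, rule assms)
  show ?thesis
  proof (intro exI[of _ A.pp] exI[of _ B.pp] conjI allI)
    show "thom_cls gen3 A.pp" by (rule A.pp_thom)
    show "thom_cls gen3 B.pp" by (rule B.pp_thom)
    show "A.pp ` tcarrier gen3 = UNIV" by (rule A.pp_surj)
    show "B.pp ` tcarrier gen3 = UNIV" by (rule B.pp_surj)
  next
    fix x1 x2 x3 y1 y2
    show "A.pp (tens3 (A.pp (tens3 x1 y1 x2)) y2 x3) = A.pp (tens3 x1 (B.pp (tens3 y1 x2 y2)) x3)"
      unfolding A.pp_tens B.pp_tens by (rule A.pp_c1(1))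
    show "A.pp (tens3 x1 (B.pp (tens3 y1 x2 y2)) x3) = A.pp (tens3 x1 y1 (A.pp (tens3 x2 y2 x3)))"
      unfolding A.pp_tens B.pp_tens by (rule A.pp_c1(2))
  next
    fix x1 x2 y1 y2 y3
    show "B.pp (tens3 (B.pp (tens3 y1 x1 y2)) x2 y3) = B.pp (tens3 y1 (A.pp (tens3 x1 y2 x2)) y3)"
      unfolding A.pp_tens B.pp_tens by (rule B.pp_c1(1))
    show "B.pp (tens3 y1 (A.pp (tens3 x1 y2 x2)) y3) = B.pp (tens3 y1 x1 (B.pp (tens3 y2 x2 y3)))"
      unfolding A.pp_tens B.pp_tens by (rule B.pp_c1(2))
  next
    fix x1 x2
    show "(\<forall>u v. A.pp (tens3 u v x1) = A.pp (tens3 u v x2)) \<longrightarrow> x1 = x2" by (rule A.pp_c3)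
    show "(\<forall>u v. A.pp (tens3 x1 v u) = A.pp (tens3 x2 v u)) \<longrightarrow> x1 = x2" by (rule A.pp_c4)
  next
    fix y1 y2
    show "(\<forall>v u. B.pp (tens3 v u y1) = B.pp (tens3 v u y2)) \<longrightarrow> y1 = y2" by (rule B.pp_c3)
    show "(\<forall>u v. B.pp (tens3 y1 u v) = B.pp (tens3 y2 u v)) \<longrightarrow> y1 = y2" using B.pp_c4 by blast
  qed
qed



locale PQ =
  fixes p :: "('x::bounded_semilattice_sup_bot \<times> 'y::bounded_semilattice_sup_bot \<times> 'x) set set \<Rightarrow> 'x"
    and q :: "('y \<times> 'x \<times> 'y) set set \<Rightarrow> 'y"
  assumes hp: "thom_cls gen3 p" and sp: "p ` tcarrier gen3 = UNIV"
    and hq: "thom_cls gen3 q" and sq: "q ` tcarrier gen3 = UNIV"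
    and c1a: "\<And>x1 x2 x3 y1 y2. p (tens3 (p (tens3 x1 y1 x2)) y2 x3) = p (tens3 x1 (q (tens3 y1 x2 y2)) x3)"
    and c1b: "\<And>x1 x2 x3 y1 y2. p (tens3 x1 (q (tens3 y1 x2 y2)) x3) = p (tens3 x1 y1 (p (tens3 x2 y2 x3)))"
    and c2a: "\<And>x1 x2 y1 y2 y3. q (tens3 (q (tens3 y1 x1 y2)) x2 y3) = q (tens3 y1 (p (tens3 x1 y2 x2)) y3)"
    and c2b: "\<And>x1 x2 y1 y2 y3. q (tens3 y1 (p (tens3 x1 y2 x2)) y3) = q (tens3 y1 x1 (q (tens3 y2 x2 y3)))"
    and c3: "\<And>x1 x2. (\<And>u v. p (tens3 u v x1) = p (tens3 u v x2)) \<Longrightarrow> x1 = x2"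
    and c4: "\<And>x1 x2. (\<And>u v. p (tens3 x1 v u) = p (tens3 x2 v u)) \<Longrightarrow> x1 = x2"
    and c5: "\<And>y1 y2. (\<And>v u. q (tens3 v u y1) = q (tens3 v u y2)) \<Longrightarrow> y1 = y2"
    and c6: "\<And>y1 y2. (\<And>u v. q (tens3 y1 u v) = q (tens3 y2 u v)) \<Longrightarrow> y1 = y2"
begin

lemmas pL = tri_lin[OF hp]
lemmas qL = tri_lin[OF hq]

lemma X_induct[case_names bot gen sup]:
  assumes "\<Phi> bot" "\<And>u v w. \<Phi> (p (tens3 u v w))" "\<And>a b. \<Phi> a \<Longrightarrow> \<Phi> b \<Longrightarrow> \<Phi> (sup a b)"
  shows "\<Phi> x"
proof -
  obtain P where P: "P \<in> tcarrier gen3" "x = p P" using sp by (metis UNIV_I imageE)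
  have "\<Phi> (p P)" using P(1)
  proof (induct rule: tcarrier_induct)
    case zero then show ?case using hp assms(1) by (simp add: thom_cls_def)
  next
    case (gen t) then show ?case using assms(2) by (cases t) auto
  next
    case (join P Q) then show ?case using hp assms(3) by (simp add: thom_cls_def)
  qed
  then show ?thesis using P by simp
qed

lemma Y_induct[case_names bot gen sup]:
  assumes "\<Phi> bot" "\<And>u v w. \<Phi> (q (tens3 u v w))" "\<And>a b. \<Phi> a \<Longrightarrow> \<Phi> b \<Longrightarrow> \<Phi> (sup a b)"
  shows "\<Phi> x"
proof -
  obtain P where P: "P \<in> tcarrier gen3" "x = q P" using sq by (metis UNIV_I imageE)
  have "\<Phi> (q P)" using P(1)
  proof (induct rule: tcarrier_induct)
    case zero then show ?case using hq assms(1) by (simp add: thom_cls_def)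
  next
    case (gen t) then show ?case using assms(2) by (cases t) auto
  next
    case (join P Q) then show ?case using hq assms(3) by (simp add: thom_cls_def)
  qed
  then show ?thesis using P by simp
qed

lemma tc2_induct[consumes 1, case_names zero gen join]:
  assumes "P \<in> tcarrier gen2" "\<Phi> (tzero gen2)" "\<And>x y. \<Phi> (tens2 x y)"
    "\<And>P Q. P \<in> tcarrier gen2 \<Longrightarrow> Q \<in> tcarrier gen2 \<Longrightarrow> \<Phi> P \<Longrightarrow> \<Phi> Q \<Longrightarrow> \<Phi> (tjoin gen2 P Q)"
  shows "\<Phi> P"
  using assms(1)
proof (induct rule: tcarrier_induct)
  case (gen t) then show ?case using assms(3) by (cases t) auto
qed (use assms in auto)

definition aL :: "('x \<times> 'y) set set \<Rightarrow> 'x \<Rightarrow> 'x" where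
  "aL P w = lift gen2 (\<lambda>(x, y). p (tens3 x y w)) P"

definition aR :: "('x \<times> 'y) set set \<Rightarrow> 'y \<Rightarrow> 'y" where
  "aR P v = lift gen2 (\<lambda>(x, y). q (tens3 v x y)) P"

lemma respL: "resp gen2 (\<lambda>(x, y). p (tens3 x y w))"
  by (rule resp_gen2) (simp_all add: pL)

lemma respR: "resp gen2 (\<lambda>(x, y). q (tens3 v x y))"
  by (rule resp_gen2) (simp_all add: qL)

lemma aL_gen[simp]: "aL (tens2 x y) w = p (tens3 x y w)"
  unfolding aL_def by (simp add: lift_gen[OF fin_gen2 respL])

lemma aL_zero[simp]: "aL (tzero gen2) w = bot"
  unfolding aL_def by (simp add: lift_zero[OF fin_gen2 respL])

lemma aL_join[simp]: "P \<in> tcarrier gen2 \<Longrightarrow> Q \<in> tcarrier gen2 \<Longrightarrow> aL (tjoin gen2 P Q) w = sup (aL P w) (aL Q w)"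
  unfolding aL_def by (simp add: lift_join[OF fin_gen2 respL])

lemma aR_gen[simp]: "aR (tens2 x y) v = q (tens3 v x y)"
  unfolding aR_def by (simp add: lift_gen[OF fin_gen2 respR])

lemma aR_zero[simp]: "aR (tzero gen2) v = bot"
  unfolding aR_def by (simp add: lift_zero[OF fin_gen2 respR])

lemma aR_join[simp]: "P \<in> tcarrier gen2 \<Longrightarrow> Q \<in> tcarrier gen2 \<Longrightarrow> aR (tjoin gen2 P Q) v = sup (aR P v) (aR Q v)"
  unfolding aR_def by (simp add: lift_join[OF fin_gen2 respR])

lemma aL_sup: "P \<in> tcarrier gen2 \<Longrightarrow> aL P (sup w w') = sup (aL P w) (aL P w')"
  by (induct rule: tc2_induct) (simp_all add: pL sup_aci)

lemma aL_bot: "P \<in> tcarrier gen2 \<Longrightarrow> aL P bot = bot"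
  by (induct rule: tc2_induct) (simp_all add: pL)

lemma K2: "P \<in> tcarrier gen2 \<Longrightarrow> q (tens3 (aR P y) u v) = q (tens3 y (aL P u) v)"
  by (induct rule: tc2_induct) (simp_all add: qL c2a)

lemma aR_det: "P \<in> tcarrier gen2 \<Longrightarrow> (\<And>u v. q (tens3 z u v) = q (tens3 y (aL P u) v)) \<Longrightarrow> aR P y = z"
  by (rule c6) (simp add: K2)

lemma L1: "P \<in> tcarrier gen2 \<Longrightarrow> p (tens3 (aL P z) v u) = aL P (p (tens3 z v u))"
  by (induct rule: tc2_induct) (simp_all add: pL c1a c1b)

lemma L2: "P \<in> tcarrier gen2 \<Longrightarrow> p (tens3 x (aR P y) w) = p (tens3 x y (aL P w))"
  by (induct rule: tc2_induct) (simp_all add: pL c1b)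

definition Act :: "('x \<Rightarrow> 'x) set" where "Act = aL ` tcarrier gen2"

lemma aL_zero_fun: "aL (tzero gen2) = (\<lambda>w. bot)" by (rule ext) simp
lemma aL_gen_fun: "aL (tens2 x y) = (\<lambda>w. p (tens3 x y w))" by (rule ext) simp
lemma aL_join_fun: "P \<in> tcarrier gen2 \<Longrightarrow> Q \<in> tcarrier gen2 \<Longrightarrow> aL (tjoin gen2 P Q) = (\<lambda>w. sup (aL P w) (aL Q w))"
  by (rule ext) simp

lemma act_zero[simp]: "(\<lambda>w. bot) \<in> Act"
  unfolding Act_def by (rule image_eqI[where f = aL and x = "tzero gen2"]) (simp_all add: aL_zero_fun tzero_in)

lemma act_P3[simp]: "(\<lambda>w. p (tens3 x y w)) \<in> Act"
  unfolding Act_def by (rule image_eqI[where f = aL and x = "tens2 x y"]) (simp_all add: aL_gen_fun tgen_in)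

lemma act_sup[simp]: "f \<in> Act \<Longrightarrow> g \<in> Act \<Longrightarrow> (\<lambda>w. sup (f w) (g w)) \<in> Act"
proof -
  assume "f \<in> Act" "g \<in> Act"
  then obtain P Q where PQ: "P \<in> tcarrier gen2" "Q \<in> tcarrier gen2" "f = aL P" "g = aL Q"
    unfolding Act_def by blast
  show ?thesis unfolding Act_def PQ(3,4)
    by (rule image_eqI[where f = aL and x = "tjoin gen2 P Q"]) (simp_all add: aL_join_fun PQ tjoin_in)
qed

lemma act_aL[simp]: "P \<in> tcarrier gen2 \<Longrightarrow> aL P \<in> Act"
  unfolding Act_def by simp

lemma act_induct[consumes 1, case_names zero gen sup]:
  assumes "f \<in> Act" "\<Phi> (\<lambda>w. bot)" "\<And>x y. \<Phi> (\<lambda>w. p (tens3 x y w))"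
    "\<And>f g. f \<in> Act \<Longrightarrow> g \<in> Act \<Longrightarrow> \<Phi> f \<Longrightarrow> \<Phi> g \<Longrightarrow> \<Phi> (\<lambda>w. sup (f w) (g w))"
  shows "\<Phi> f"
proof -
  obtain P where P: "P \<in> tcarrier gen2" "f = aL P" using assms(1) unfolding Act_def by auto
  have "\<Phi> (aL P)" using P(1)
  proof (induct rule: tc2_induct)
    case zero then show ?case using assms(2) by (simp add: aL_zero_fun)
  next
    case (gen x y) then show ?case using assms(3) by (simp add: aL_gen_fun)
  next
    case (join P Q) then show ?case using assms(4)[of "aL P" "aL Q"] by (simp add: aL_join_fun)
  qed
  then show ?thesis using P by simp
qed

lemma act_sup_pres: "f \<in> Act \<Longrightarrow> f (sup a b) = sup (f a) (f b)"
  unfolding Act_def using aL_sup by auto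

lemma act_bot: "f \<in> Act \<Longrightarrow> f bot = bot"
  unfolding Act_def using aL_bot by auto

lemma act_comp[simp]: "f \<in> Act \<Longrightarrow> g \<in> Act \<Longrightarrow> (\<lambda>w. f (g w)) \<in> Act"
proof (induct f rule: act_induct)
  case zero then show ?case by simp
next
  case (gen x y)
  show ?case using gen
  proof (induct g rule: act_induct)
    case zero then show ?case by (simp add: pL)
  next
    case (gen x2 y2) then show ?case by (simp add: c1b[symmetric])
  next
    case (sup g1 g2) then show ?case by (simp add: pL)
  qed
next
  case (sup f1 f2) then show ?case by simp
qed

definition enc :: "('x \<Rightarrow> 'x) \<Rightarrow> ('x \<times> 'y) set set" where
  "enc f = (SOME P. P \<in> tcarrier gen2 \<and> aL P = f)"

lemma enc_spec: "f \<in> Act \<Longrightarrow> enc f \<in> tcarrier gen2 \<and> aL (enc f) = f"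
  unfolding enc_def by (rule someI_ex) (auto simp: Act_def)

lemma aL_enc[simp]: "f \<in> Act \<Longrightarrow> aL (enc f) = f"
  using enc_spec by blast

definition CA :: "('x \<times> 'y) set set set" where "CA = enc ` Act"

lemma enc_CA[simp]: "f \<in> Act \<Longrightarrow> enc f \<in> CA"
  unfolding CA_def by simp

lemma CA_tc[simp]: "a \<in> CA \<Longrightarrow> a \<in> tcarrier gen2"
  unfolding CA_def using enc_spec by auto

lemma CA_Act[simp]: "a \<in> CA \<Longrightarrow> aL a \<in> Act"
  by simp

lemma CA_enc[simp]: "a \<in> CA \<Longrightarrow> enc (aL a) = a"
  unfolding CA_def by auto

lemma CA_eq: "a \<in> CA \<Longrightarrow> b \<in> CA \<Longrightarrow> (a = b) \<longleftrightarrow> aL a = aL b"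
  by (metis CA_enc)

definition jA :: "('x \<times> 'y) set set \<Rightarrow> ('x \<times> 'y) set set \<Rightarrow> ('x \<times> 'y) set set" where
  "jA a b = enc (\<lambda>w. sup (aL a w) (aL b w))"
definition zA :: "('x \<times> 'y) set set" where "zA = enc (\<lambda>w. bot)"
definition mA :: "('x \<times> 'y) set set \<Rightarrow> ('x \<times> 'y) set set \<Rightarrow> ('x \<times> 'y) set set" where
  "mA a b = enc (\<lambda>w. aL a (aL b w))"
definition prA :: "'x \<Rightarrow> 'y \<Rightarrow> ('x \<times> 'y) set set" where
  "prA x y = enc (\<lambda>w. p (tens3 x y w))"

lemma jA_in[simp]: "a \<in> CA \<Longrightarrow> b \<in> CA \<Longrightarrow> jA a b \<in> CA" unfolding jA_def by simp
lemma zA_in[simp]: "zA \<in> CA" unfolding zA_def by simp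
lemma mA_in[simp]: "a \<in> CA \<Longrightarrow> b \<in> CA \<Longrightarrow> mA a b \<in> CA" unfolding mA_def by simp
lemma prA_in[simp]: "prA x y \<in> CA" unfolding prA_def by simp

lemma aL_jA[simp]: "a \<in> CA \<Longrightarrow> b \<in> CA \<Longrightarrow> aL (jA a b) = (\<lambda>w. sup (aL a w) (aL b w))"
  unfolding jA_def by simp
lemma aL_zA[simp]: "aL zA = (\<lambda>w. bot)" unfolding zA_def by simp
lemma aL_mA[simp]: "a \<in> CA \<Longrightarrow> b \<in> CA \<Longrightarrow> aL (mA a b) = (\<lambda>w. aL a (aL b w))"
  unfolding mA_def by simp
lemma aL_prA[simp]: "aL (prA x y) = (\<lambda>w. p (tens3 x y w))" unfolding prA_def by simp

lemma aL_sup_CA[simp]: "a \<in> CA \<Longrightarrow> aL a (sup u v) = sup (aL a u) (aL a v)"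
  by (simp add: aL_sup)
lemma aL_bot_CA[simp]: "a \<in> CA \<Longrightarrow> aL a bot = bot"
  by (simp add: aL_bot)

lemma msl_A: "msl CA jA zA mA"
  unfolding msl_def jsl_def
proof (intro conjI ballI)
  fix a b c assume h: "a \<in> CA" "b \<in> CA" "c \<in> CA"
  show "jA (jA a b) c = jA a (jA b c)" using h by (subst CA_eq) (simp_all add: sup_assoc)
  show "mA (mA a b) c = mA a (mA b c)" using h by (subst CA_eq) simp_all
  show "mA a (jA b c) = jA (mA a b) (mA a c)" using h by (subst CA_eq) simp_all
  show "mA (jA b c) a = jA (mA b a) (mA c a)" using h by (subst CA_eq) simp_all
next
  fix a b assume h: "a \<in> CA" "b \<in> CA"
  show "jA a b = jA b a" using h by (subst CA_eq) (simp_all add: sup_commute)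
  show "jA a b \<in> CA" "mA a b \<in> CA" using h by simp_all
next
  fix a assume h: "a \<in> CA"
  show "jA a a = a" using h by (subst CA_eq) simp_all
  show "jA zA a = a" using h by (subst CA_eq) simp_all
  show "mA a zA = zA" using h by (subst CA_eq) simp_all
  show "mA zA a = zA" using h by (subst CA_eq) simp_all
qed simp

abbreviation FA where "FA \<equiv> (\<lambda>(b, c) acc. jA (mA b c) acc)"

lemma foldr_FA_in: "set ps \<subseteq> CA \<times> CA \<Longrightarrow> acc \<in> CA \<Longrightarrow> foldr FA ps acc \<in> CA"
  by (induct ps) auto

lemma jA_assoc: "a \<in> CA \<Longrightarrow> b \<in> CA \<Longrightarrow> c \<in> CA \<Longrightarrow> jA (jA a b) c = jA a (jA b c)"
  by (subst CA_eq) (simp_all add: sup_assoc)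

lemma jA_zero: "a \<in> CA \<Longrightarrow> jA zA a = a"
  by (subst CA_eq) simp_all

lemma jA_zero2: "a \<in> CA \<Longrightarrow> jA a zA = a"
  by (subst CA_eq) simp_all

lemma foldr_FA_acc: "set ps \<subseteq> CA \<times> CA \<Longrightarrow> acc \<in> CA \<Longrightarrow> foldr FA ps acc = jA (foldr FA ps zA) acc"
proof (induct ps)
  case Nil then show ?case by (simp add: jA_zero)
next
  case (Cons bc ps)
  obtain b c where bc: "bc = (b, c)" by fastforce
  have bcin: "b \<in> CA" "c \<in> CA" "set ps \<subseteq> CA \<times> CA" using Cons(2) bc by auto
  have IH: "foldr FA ps acc = jA (foldr FA ps zA) acc" using Cons bcin by blast
  have F0: "foldr FA ps zA \<in> CA" using foldr_FA_in bcin(3) by simp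
  show ?case using bcin F0 IH Cons(3) bc by (simp add: jA_assoc)
qed

definition EA where "EA = {a. \<exists>ps. set ps \<subseteq> CA \<times> CA \<and> a = foldr FA ps zA}"

lemma EA_zero: "zA \<in> EA" unfolding EA_def by (auto intro: exI[of _ "[]"])

lemma EA_m: "b \<in> CA \<Longrightarrow> c \<in> CA \<Longrightarrow> mA b c \<in> EA"
proof -
  assume bc: "b \<in> CA" "c \<in> CA"
  have "foldr FA [(b, c)] zA = mA b c" using bc by (simp add: jA_zero2)
  moreover have "set [(b, c)] \<subseteq> CA \<times> CA" using bc by simp
  ultimately show ?thesis unfolding EA_def by blast
qed

lemma EA_j: "a \<in> EA \<Longrightarrow> b \<in> EA \<Longrightarrow> jA a b \<in> EA"
proof -
  assume "a \<in> EA" "b \<in> EA"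
  then obtain ps qs where ps: "set ps \<subseteq> CA \<times> CA" "a = foldr FA ps zA"
    and qs: "set qs \<subseteq> CA \<times> CA" "b = foldr FA qs zA" unfolding EA_def by blast
  have "foldr FA (ps @ qs) zA = jA a b"
    using ps qs foldr_FA_acc[OF ps(1), of "foldr FA qs zA"] foldr_FA_in by simp
  moreover have "set (ps @ qs) \<subseteq> CA \<times> CA" using ps qs by auto
  ultimately show ?thesis unfolding EA_def by blast
qed

lemma enc_EA: "f \<in> Act \<Longrightarrow> enc f \<in> EA"
proof (induct f rule: act_induct)
  case zero then show ?case using EA_zero by (simp add: zA_def)
next
  case (gen x y)
  show ?case
  proof (induct x rule: X_induct)
    case bot then show ?case using EA_zero by (simp add: zA_def pL)
  next
    case (gen u v w')
    have "enc (\<lambda>w. p (tens3 (p (tens3 u v w')) y w)) = mA (prA u v) (prA w' y)"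
      by (simp add: mA_def c1a c1b)
    then show ?case using EA_m by simp
  next
    case (sup a b)
    have "enc (\<lambda>w. p (tens3 (sup a b) y w)) = jA (enc (\<lambda>w. p (tens3 a y w))) (enc (\<lambda>w. p (tens3 b y w)))"
      by (simp add: jA_def pL)
    then show ?case using EA_j sup by simp
  qed
next
  case (sup f g)
  have "enc (\<lambda>w. sup (f w) (g w)) = jA (enc f) (enc g)" using sup by (simp add: jA_def)
  then show ?case using EA_j sup by simp
qed

lemma aL_ext_X: "a \<in> CA \<Longrightarrow> b \<in> CA \<Longrightarrow> (\<And>u v w. aL a (p (tens3 u v w)) = aL b (p (tens3 u v w))) \<Longrightarrow> a = b"
proof -
  assume ab: "a \<in> CA" "b \<in> CA" and h: "\<And>u v w. aL a (p (tens3 u v w)) = aL b (p (tens3 u v w))"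
  have "aL a z = aL b z" for z
    by (induct z rule: X_induct) (use ab h in simp_all)
  then show "a = b" using ab CA_eq by blast
qed

lemma msl_reg_A: "msl_regular CA jA zA mA"
  unfolding msl_regular_def
proof (intro conjI ballI impI)
  show "msl CA jA zA mA" by (rule msl_A)
next
  fix a assume "a \<in> CA"
  then have "enc (aL a) \<in> EA" by (intro enc_EA) simp
  then show "\<exists>ps. set ps \<subseteq> CA \<times> CA \<and> a = foldr (\<lambda>(b, c) acc. jA (mA b c) acc) ps zA"
    using \<open>a \<in> CA\<close> unfolding EA_def by simp
next
  fix a b assume ab: "a \<in> CA" "b \<in> CA" and h: "\<forall>c\<in>CA. mA a c = mA b c"
  show "a = b"
  proof (rule aL_ext_X[OF ab])
    fix u v w
    have "aL (mA a (prA u v)) w = aL (mA b (prA u v)) w" using h by simp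
    then show "aL a (p (tens3 u v w)) = aL b (p (tens3 u v w))" using ab by simp
  qed
next
  fix a b assume ab: "a \<in> CA" "b \<in> CA" and h: "\<forall>c\<in>CA. mA c a = mA c b"
  have "aL a w = aL b w" for w
  proof (rule c3)
    fix u v
    have "aL (mA (prA u v) a) w = aL (mA (prA u v) b) w" using h by simp
    then show "p (tens3 u v (aL a w)) = p (tens3 u v (aL b w))" using ab by simp
  qed
  then show "a = b" using ab CA_eq by blast
qed

lemma lmod_reg_A: "lmod_regular CA jA zA mA aL"
  unfolding lmod_regular_def lmod_def
proof (intro conjI allI ballI impI)
  fix x :: 'x
  show "\<exists>ps. fst ` set ps \<subseteq> CA \<and> x = foldr (\<lambda>(a, y) acc. sup (aL a y) acc) ps bot"
  proof (induct x rule: X_induct)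
    case bot then show ?case by (auto intro: exI[of _ "[]"])
  next
    case (gen u v w) then show ?case by (auto intro!: exI[of _ "[(prA u v, w)]"])
  next
    case (sup a b)
    then obtain ps qs where "fst ` set ps \<subseteq> CA" "a = foldr (\<lambda>(a, y) acc. sup (aL a y) acc) ps bot"
      "fst ` set qs \<subseteq> CA" "b = foldr (\<lambda>(a, y) acc. sup (aL a y) acc) qs bot" by blast
    then show ?case by (intro exI[of _ "ps @ qs"]) (simp add: foldr_sup_pair0 image_Un)
  qed
next
  fix x y :: 'x assume h: "\<forall>a\<in>CA. aL a x = aL a y"
  show "x = y"
  proof (rule c3)
    fix u v show "p (tens3 u v x) = p (tens3 u v y)" using h[rule_format, of "prA u v"] by simp
  qed
qed simp_all

lemma aR_prA: "aR (prA u w) v = q (tens3 v u w)"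
  by (rule aR_det) (simp_all add: c2a)

lemma rmod_reg_A: "rmod_regular CA jA zA mA (\<lambda>y a. aR a y)"
  unfolding rmod_regular_def rmod_def
proof (intro conjI allI ballI impI)
  fix x a b assume ab: "a \<in> CA" "b \<in> CA"
  show "aR (mA a b) x = aR b (aR a x)"
    by (rule aR_det) (use ab in \<open>simp_all add: K2\<close>)
next
  fix x y a assume a: "a \<in> CA"
  show "aR a (sup x y) = sup (aR a x) (aR a y)"
    by (rule aR_det) (use a in \<open>simp_all add: K2 qL\<close>)
next
  fix a assume a: "a \<in> CA"
  show "aR a bot = bot"
    by (rule aR_det) (use a in \<open>simp_all add: K2 qL\<close>)
next
  fix x a b assume ab: "a \<in> CA" "b \<in> CA"
  show "aR (jA a b) x = sup (aR a x) (aR b x)"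
    by (rule aR_det) (use ab in \<open>simp_all add: K2 qL\<close>)
next
  fix x
  show "aR zA x = bot"
    by (rule aR_det) (simp_all add: K2 qL zA_def[symmetric])
next
  fix x :: 'y
  show "\<exists>ps. snd ` set ps \<subseteq> CA \<and> x = foldr (\<lambda>(y, a) acc. sup (aR a y) acc) ps bot"
  proof (induct x rule: Y_induct)
    case bot then show ?case by (auto intro: exI[of _ "[]"])
  next
    case (gen v u w) then show ?case by (auto intro!: exI[of _ "[(v, prA u w)]"] simp: aR_prA)
  next
    case (sup a b)
    then obtain ps qs where "snd ` set ps \<subseteq> CA" "a = foldr (\<lambda>(y, a) acc. sup (aR a y) acc) ps bot"
      "snd ` set qs \<subseteq> CA" "b = foldr (\<lambda>(y, a) acc. sup (aR a y) acc) qs bot" by blast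
    then show ?case by (intro exI[of _ "ps @ qs"]) (simp add: foldr_sup_pair0 image_Un)
  qed
next
  fix x y :: 'y assume h: "\<forall>a\<in>CA. aR a x = aR a y"
  show "x = y"
  proof (rule c6)
    fix u v show "q (tens3 x u v) = q (tens3 y u v)" using h[rule_format, of "prA u v"] by (simp add: aR_prA)
  qed
qed

lemma prA_facts:
  "\<forall>x y. prA x y \<in> CA"
  "\<forall>x x' y. prA (sup x x') y = jA (prA x y) (prA x' y)"
  "\<forall>y. prA bot y = zA"
  "\<forall>x y y'. prA x (sup y y') = jA (prA x y) (prA x y')"
  "\<forall>x. prA x bot = zA"
  "\<forall>a\<in>CA. \<forall>x y. prA (aL a x) y = mA a (prA x y)"
  "\<forall>a\<in>CA. \<forall>x y. prA x (aR a y) = mA (prA x y) a"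
  by (auto simp: CA_eq pL L1 L2 fun_eq_iff)

definition hA :: "('x \<times> 'y) set set \<Rightarrow> ('x \<times> 'y) set set" where "hA P = enc (aL P)"

lemma hA_fact: "\<exists>h. thom gen2 CA jA zA h \<and> (\<forall>x y. h (tens2 x y) = prA x y) \<and> h ` tcarrier gen2 = CA"
proof (intro exI conjI allI)
  show "thom gen2 CA jA zA hA"
    unfolding thom_def hA_def
    by (auto simp: CA_eq aL_zero_fun aL_join_fun tjoin_in tzero_in zA_def[symmetric])
  show "hA (tens2 x y) = prA x y" for x y by (simp add: hA_def aL_gen_fun prA_def)
  show "hA ` tcarrier gen2 = CA" unfolding hA_def CA_def Act_def by (simp add: image_image)
qed

sublocale B: PQ q p
proof
  show "thom_cls gen3 q" by (rule hq)
  show "q ` tcarrier gen3 = UNIV" by (rule sq)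
  show "thom_cls gen3 p" by (rule hp)
  show "p ` tcarrier gen3 = UNIV" by (rule sp)
  show "\<And>x1 x2 x3 y1 y2. q (tens3 (q (tens3 x1 y1 x2)) y2 x3) = q (tens3 x1 (p (tens3 y1 x2 y2)) x3)"
    by (rule c2a)
  show "\<And>x1 x2 x3 y1 y2. q (tens3 x1 (p (tens3 y1 x2 y2)) x3) = q (tens3 x1 y1 (q (tens3 x2 y2 x3)))"
    by (rule c2b)
  show "\<And>x1 x2 y1 y2 y3. p (tens3 (p (tens3 y1 x1 y2)) x2 y3) = p (tens3 y1 (q (tens3 x1 y2 x2)) y3)"
    by (rule c1a)
  show "\<And>x1 x2 y1 y2 y3. p (tens3 y1 (q (tens3 x1 y2 x2)) y3) = p (tens3 y1 x1 (p (tens3 y2 x2 y3)))"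
    by (rule c1b)
  show "\<And>x1 x2. (\<And>u v. q (tens3 u v x1) = q (tens3 u v x2)) \<Longrightarrow> x1 = x2" by (rule c5)
  show "\<And>x1 x2. (\<And>u v. q (tens3 x1 v u) = q (tens3 x2 v u)) \<Longrightarrow> x1 = x2" by (rule c6)
  show "\<And>y1 y2. (\<And>v u. p (tens3 v u y1) = p (tens3 v u y2)) \<Longrightarrow> y1 = y2" by (rule c3)
  show "\<And>y1 y2. (\<And>u v. p (tens3 y1 u v) = p (tens3 y2 u v)) \<Longrightarrow> y1 = y2" by (rule c4)
qed

lemma M1: "\<forall>a\<in>CA. \<forall>b\<in>B.CA. \<forall>x. B.aR b (aL a x) = aL a (B.aR b x)"
proof (intro ballI allI)
  fix a b x assume a: "a \<in> CA" and b: "b \<in> B.CA"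
  show "B.aR b (aL a x) = aL a (B.aR b x)"
  proof (rule B.aR_det)
    show "b \<in> tcarrier gen2" using b by simp
    fix u v
    show "p (tens3 (aL a (B.aR b x)) u v) = p (tens3 (aL a x) (B.aL b u) v)"
      using a b by (simp add: L1 B.K2)
  qed
qed

lemma I1: "\<forall>x y. \<forall>b\<in>B.CA. prA (B.aR b x) y = prA x (B.aL b y)"
  using B.K2 by (simp add: prA_def)

lemma I3: "\<forall>x1 y x2. aL (prA x1 y) x2 = B.aR (B.prA y x2) x1"
  by (simp add: B.aR_prA)

lemma M1': "\<forall>a\<in>B.CA. \<forall>b\<in>CA. \<forall>x. aR b (B.aL a x) = B.aL a (aR b x)"
proof (intro ballI allI)
  fix a b x assume a: "a \<in> B.CA" and b: "b \<in> CA"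
  show "aR b (B.aL a x) = B.aL a (aR b x)"
  proof (rule aR_det)
    show "b \<in> tcarrier gen2" using b by simp
    fix u v
    show "q (tens3 (B.aL a (aR b x)) u v) = q (tens3 (B.aL a x) (aL b u) v)"
      using a b by (simp add: B.L1 K2)
  qed
qed

lemma I1': "\<forall>x y. \<forall>b\<in>CA. B.prA (aR b x) y = B.prA x (aL b y)"
  using K2 by (simp add: B.prA_def)

lemma I3': "\<forall>x1 y x2. B.aL (B.prA x1 y) x2 = aR (prA y x2) x1"
  by (simp add: aR_prA)

lemma the_context:
  "morita_context CA jA zA mA B.CA B.jA B.zA B.mA aL (\<lambda>x b. B.aR b x) B.aL (\<lambda>y a. aR a y) prA B.prA"
  unfolding morita_context_def
  using msl_reg_A B.msl_reg_A lmod_reg_A B.lmod_reg_A rmod_reg_A B.rmod_reg_A prA_facts B.prA_facts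
    hA_fact B.hA_fact M1 M1' I1 I1' I3 I3'
  by (-, intro conjI) assumption+

end

lemma dir2:
  fixes X :: "'x::bounded_semilattice_sup_bot itself"
    and Y :: "'y::bounded_semilattice_sup_bot itself"
  assumes "\<exists>(p :: ('x \<times> 'y \<times> 'x) set set \<Rightarrow> 'x) (q :: ('y \<times> 'x \<times> 'y) set set \<Rightarrow> 'y).
      thom_cls gen3 p \<and> p ` tcarrier gen3 = UNIV \<and>
      thom_cls gen3 q \<and> q ` tcarrier gen3 = UNIV \<and>
      (\<forall>x1 x2 x3 y1 y2.
          p (tens3 (p (tens3 x1 y1 x2)) y2 x3) = p (tens3 x1 (q (tens3 y1 x2 y2)) x3) \<and>
          p (tens3 x1 (q (tens3 y1 x2 y2)) x3) = p (tens3 x1 y1 (p (tens3 x2 y2 x3)))) \<and>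
      (\<forall>x1 x2 y1 y2 y3.
          q (tens3 (q (tens3 y1 x1 y2)) x2 y3) = q (tens3 y1 (p (tens3 x1 y2 x2)) y3) \<and>
          q (tens3 y1 (p (tens3 x1 y2 x2)) y3) = q (tens3 y1 x1 (q (tens3 y2 x2 y3)))) \<and>
      (\<forall>x1 x2. (\<forall>u v. p (tens3 u v x1) = p (tens3 u v x2)) \<longrightarrow> x1 = x2) \<and>
      (\<forall>x1 x2. (\<forall>u v. p (tens3 x1 v u) = p (tens3 x2 v u)) \<longrightarrow> x1 = x2) \<and>
      (\<forall>y1 y2. (\<forall>v u. q (tens3 v u y1) = q (tens3 v u y2)) \<longrightarrow> y1 = y2) \<and>
      (\<forall>y1 y2. (\<forall>u v. q (tens3 y1 u v) = q (tens3 y2 u v)) \<longrightarrow> y1 = y2)"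
  shows "morita_pair TYPE(('x \<times> 'y) set set) TYPE(('y \<times> 'x) set set) X Y"
proof -
  obtain p :: "('x \<times> 'y \<times> 'x) set set \<Rightarrow> 'x" and q :: "('y \<times> 'x \<times> 'y) set set \<Rightarrow> 'y"
    where h: "thom_cls gen3 p" "p ` tcarrier gen3 = UNIV" "thom_cls gen3 q" "q ` tcarrier gen3 = UNIV"
      "\<forall>x1 x2 x3 y1 y2.
          p (tens3 (p (tens3 x1 y1 x2)) y2 x3) = p (tens3 x1 (q (tens3 y1 x2 y2)) x3) \<and>
          p (tens3 x1 (q (tens3 y1 x2 y2)) x3) = p (tens3 x1 y1 (p (tens3 x2 y2 x3)))"
      "\<forall>x1 x2 y1 y2 y3.
          q (tens3 (q (tens3 y1 x1 y2)) x2 y3) = q (tens3 y1 (p (tens3 x1 y2 x2)) y3) \<and>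
          q (tens3 y1 (p (tens3 x1 y2 x2)) y3) = q (tens3 y1 x1 (q (tens3 y2 x2 y3)))"
      "\<forall>x1 x2. (\<forall>u v. p (tens3 u v x1) = p (tens3 u v x2)) \<longrightarrow> x1 = x2"
      "\<forall>x1 x2. (\<forall>u v. p (tens3 x1 v u) = p (tens3 x2 v u)) \<longrightarrow> x1 = x2"
      "\<forall>y1 y2. (\<forall>v u. q (tens3 v u y1) = q (tens3 v u y2)) \<longrightarrow> y1 = y2"
      "\<forall>y1 y2. (\<forall>u v. q (tens3 y1 u v) = q (tens3 y2 u v)) \<longrightarrow> y1 = y2"
    using assms by (elim exE conjE) (rule that; assumption)
  interpret PQ p q
  proof
    show "thom_cls gen3 p" "p ` tcarrier gen3 = UNIV" "thom_cls gen3 q" "q ` tcarrier gen3 = UNIV"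
      using h(1-4) by blast+
  qed (use h(5-10) in blast)+
  show ?thesis unfolding morita_pair_def using the_context by blast
qed


theorem corollary1:
  fixes X :: "'x::bounded_semilattice_sup_bot itself"
    and Y :: "'y::bounded_semilattice_sup_bot itself"
  defines "RHS \<equiv> (\<exists>(p :: ('x \<times> 'y \<times> 'x) set set \<Rightarrow> 'x) (q :: ('y \<times> 'x \<times> 'y) set set \<Rightarrow> 'y).
      thom_cls gen3 p \<and> p ` tcarrier gen3 = UNIV \<and>
      thom_cls gen3 q \<and> q ` tcarrier gen3 = UNIV \<and>
      (\<forall>x1 x2 x3 y1 y2.
          p (tens3 (p (tens3 x1 y1 x2)) y2 x3) = p (tens3 x1 (q (tens3 y1 x2 y2)) x3) \<and>
          p (tens3 x1 (q (tens3 y1 x2 y2)) x3) = p (tens3 x1 y1 (p (tens3 x2 y2 x3)))) \<and>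
      (\<forall>x1 x2 y1 y2 y3.
          q (tens3 (q (tens3 y1 x1 y2)) x2 y3) = q (tens3 y1 (p (tens3 x1 y2 x2)) y3) \<and>
          q (tens3 y1 (p (tens3 x1 y2 x2)) y3) = q (tens3 y1 x1 (q (tens3 y2 x2 y3)))) \<and>
      (\<forall>x1 x2. (\<forall>u v. p (tens3 u v x1) = p (tens3 u v x2)) \<longrightarrow> x1 = x2) \<and>
      (\<forall>x1 x2. (\<forall>u v. p (tens3 x1 v u) = p (tens3 x2 v u)) \<longrightarrow> x1 = x2) \<and>
      (\<forall>y1 y2. (\<forall>v u. q (tens3 v u y1) = q (tens3 v u y2)) \<longrightarrow> y1 = y2) \<and>
      (\<forall>y1 y2. (\<forall>u v. q (tens3 y1 u v) = q (tens3 y2 u v)) \<longrightarrow> y1 = y2))"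
  shows "(morita_pair TYPE('a) TYPE('b) X Y \<longrightarrow> RHS) \<and>
         (RHS \<longrightarrow> morita_pair TYPE(('x \<times> 'y) set set) TYPE(('y \<times> 'x) set set) X Y)"
proof -
  have d1: "morita_pair TYPE('a) TYPE('b) X Y \<longrightarrow> RHS"
  proof
    assume "morita_pair TYPE('a) TYPE('b) X Y"
    then obtain CA :: "'a set" and jA zA mA and CB :: "'b set" and jB zB mB
      and lX :: "'a \<Rightarrow> 'x \<Rightarrow> 'x" and rX and lY :: "'b \<Rightarrow> 'y \<Rightarrow> 'y" and rY and pr and br
      where "morita_context CA jA zA mA CB jB zB mB lX rX lY rY pr br"
      unfolding morita_pair_def by (elim exE) (rule that)
    then show RHS unfolding RHS_def by (rule dir1)
  qed
  have d2: "RHS \<longrightarrow> morita_pair TYPE(('x \<times> 'y) set set) TYPE(('y \<times> 'x) set set) X Y"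
    unfolding RHS_def by (intro impI dir2)
  show ?thesis using d1 d2 by blast
qed

end
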